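(* Let $\delta\le1/4$ and let $\mathcal{I}$ be a $\delta$-ONI instance with $n$ agents. Then for every agent $i\in N^2(\mathcal{I})$, $v_i(2n+1)<\frac1{12}+\delta$.
   Context: Instance with agents $[n]$, goods $[m]$ ($m\ge2n$), additive valuations; goods with index larger than $m$ are dummy goods of value $0$. Ordered: $v_i(1)\ge\dots\ge v_i(m)$ for all $i$. Normalized: every agent $i$ has a partition of the goods into $n$ bundles each of value exactly $1$ to $i$ (an MMS partition). $\alpha$-irreducible: for every agent $i$, $v_i(1)<\alpha$, $v_i(\{2n-1,2n,2n+1\})<\alpha$, $v_i(\{3n-2,\dots,3n+1\})<\alpha$, $v_i(\{1,2n+1\})<\alpha$. $\delta$-ONI: ordered, normalized, $(3/4+\delta)$-irreducible. $B_k=\{k,2n-k+1\}$ for $k\in[n]$; $N^2(\mathcal{I})=\{i\in[n]:\exists k\in[n],\ v_i(B_k)>1\}$. *)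

theory Defs
  imports Complex_Main
begin

text \<open>Agents are 1..n, goods are 1..m. The valuation of agent i for good g is v i g.
  Goods outside 1..m (in particular indices larger than m) are dummy goods of value 0.\<close>

definition gval :: "nat \<Rightarrow> (nat \<Rightarrow> nat \<Rightarrow> real) \<Rightarrow> nat \<Rightarrow> nat \<Rightarrow> real" where
  "gval m v i g = (if 1 \<le> g \<and> g \<le> m then v i g else 0)"

definition bval :: "nat \<Rightarrow> (nat \<Rightarrow> nat \<Rightarrow> real) \<Rightarrow> nat \<Rightarrow> nat set \<Rightarrow> real" where
  "bval m v i S = (\<Sum>g\<in>S. gval m v i g)"

definition add_instance :: "nat \<Rightarrow> nat \<Rightarrow> (nat \<Rightarrow> nat \<Rightarrow> real) \<Rightarrow> bool" where
  "add_instance n m v \<longleftrightarrow> 1 \<le> n \<and> 2 * n \<le> m \<and>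
     (\<forall>i\<in>{1..n}. \<forall>g\<in>{1..m}. 0 \<le> v i g)"

definition ordered :: "nat \<Rightarrow> nat \<Rightarrow> (nat \<Rightarrow> nat \<Rightarrow> real) \<Rightarrow> bool" where
  "ordered n m v \<longleftrightarrow>
     (\<forall>i\<in>{1..n}. \<forall>g. 1 \<le> g \<and> g < m \<longrightarrow> v i (Suc g) \<le> v i g)"

definition normalized :: "nat \<Rightarrow> nat \<Rightarrow> (nat \<Rightarrow> nat \<Rightarrow> real) \<Rightarrow> bool" where
  "normalized n m v \<longleftrightarrow>
     (\<forall>i\<in>{1..n}. \<exists>P :: nat \<Rightarrow> nat set.
        (\<Union>k\<in>{1..n}. P k) = {1..m} \<and>
        (\<forall>k\<in>{1..n}. \<forall>l\<in>{1..n}. k \<noteq> l \<longrightarrow> P k \<inter> P l = {}) \<and>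
        (\<forall>k\<in>{1..n}. bval m v i (P k) = 1))"

definition irreducible :: "real \<Rightarrow> nat \<Rightarrow> nat \<Rightarrow> (nat \<Rightarrow> nat \<Rightarrow> real) \<Rightarrow> bool" where
  "irreducible \<alpha> n m v \<longleftrightarrow>
     (\<forall>i\<in>{1..n}.
        gval m v i 1 < \<alpha> \<and>
        bval m v i {2*n-1, 2*n, 2*n+1} < \<alpha> \<and>
        bval m v i {3*n-2..3*n+1} < \<alpha> \<and>
        bval m v i {1, 2*n+1} < \<alpha>)"

definition ONI :: "real \<Rightarrow> nat \<Rightarrow> nat \<Rightarrow> (nat \<Rightarrow> nat \<Rightarrow> real) \<Rightarrow> bool" where
  "ONI \<delta> n m v \<longleftrightarrow> ordered n m v \<and> normalized n m v \<and> irreducible (3/4 + \<delta>) n m v"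

definition B :: "nat \<Rightarrow> nat \<Rightarrow> nat set" where
  "B n k = {k, 2*n - k + 1}"

definition N2 :: "nat \<Rightarrow> nat \<Rightarrow> (nat \<Rightarrow> nat \<Rightarrow> real) \<Rightarrow> nat set" where
  "N2 n m v = {i\<in>{1..n}. \<exists>k\<in>{1..n}. bval m v i (B n k) > 1}"

end

theory Submission
  imports Defs
begin

lemma key:
  fixes f :: "nat \<Rightarrow> real"
  assumes nn: "\<And>g. f g \<ge> 0" and mono: "\<And>g h. 1 \<le> g \<Longrightarrow> g \<le> h \<Longrightarrow> f h \<le> f g"
    and k1: "1 \<le> k" and kt: "k < t" and big: "f k + f t > 1" and three: "3 * f t > 1"
    and fin: "finite A" and le1: "sum f A \<le> 1"
  shows "card (A \<inter> {1..t}) + card (A \<inter> {1..k}) \<le> 2"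
proof (rule ccontr)
  assume H: "\<not> ?thesis"
  have sub: "\<And>S. S \<subseteq> A \<Longrightarrow> sum f S \<le> 1"
    using le1 fin by (smt (verit) nn sum_mono2)
  have KT: "card (A \<inter> {1..k}) \<le> card (A \<inter> {1..t})"
    by (rule card_mono) (use fin kt in auto)
  show False
  proof (cases "A \<inter> {1..k} = {}")
    case True
    then have "card (A \<inter> {1..t}) \<ge> 3" using H by simp
    then obtain S where S: "S \<subseteq> A \<inter> {1..t}" "card S = 3"
      by (meson obtain_subset_with_card_n)
    have "sum f S \<ge> sum (\<lambda>_. f t) S"
      by (rule sum_mono) (use S mono in auto)
    then have "sum f S \<ge> 3 * f t" using S by simp
    moreover have "sum f S \<le> 1" using S sub by auto
    ultimately show False using three by simp
  next
    case False
    then obtain g1 where g1: "g1 \<in> A" "1 \<le> g1" "g1 \<le> k" by auto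
    have "card (A \<inter> {1..t}) \<ge> 2" using H KT by linarith
    moreover have "card (A \<inter> {1..t} - {g1}) = card (A \<inter> {1..t}) - 1"
      using g1 kt by (simp add: card_Diff_singleton)
    ultimately have "card (A \<inter> {1..t} - {g1}) \<ge> 1" by arith
    then have "A \<inter> {1..t} - {g1} \<noteq> {}" by (metis card.empty not_one_le_zero)
    then obtain g2 where "g2 \<in> A \<inter> {1..t} - {g1}" by blast
    then have g2: "g2 \<in> A" "1 \<le> g2" "g2 \<le> t" "g2 \<noteq> g1" by auto
    have "sum f {g1, g2} = f g1 + f g2" using g2 by simp
    moreover have "f g1 \<ge> f k" using mono g1 by auto
    moreover have "f g2 \<ge> f t" using mono g2 by auto
    moreover have "sum f {g1, g2} \<le> 1" using sub[of "{g1, g2}"] g1 g2 by blast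
    ultimately show False using big by linarith
  qed
qed

theorem mainTheorem14:
  fixes \<delta> :: real and n m :: nat and v :: "nat \<Rightarrow> nat \<Rightarrow> real"
  assumes "\<delta> \<le> 1/4"
    and "add_instance n m v"
    and "ONI \<delta> n m v"
    and "i \<in> N2 n m v"
  shows "gval m v i (2*n+1) < 1/12 + \<delta>"
proof (rule ccontr)
  assume C: "\<not> ?thesis"
  define f where "f = gval m v i"
  have i: "i \<in> {1..n}" using assms(4) by (simp add: N2_def)
  have n1: "1 \<le> n" "2*n \<le> m" using assms(2) by (auto simp: add_instance_def)
  have nn: "\<And>g. f g \<ge> 0"
    using assms(2) i by (auto simp: f_def gval_def add_instance_def)
  have ord: "\<And>g. 1 \<le> g \<Longrightarrow> g < m \<Longrightarrow> v i (Suc g) \<le> v i g"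
    using assms(3) i by (auto simp: ONI_def ordered_def)
  have monod: "\<And>g d. 1 \<le> g \<Longrightarrow> f (g + d) \<le> f g"
  proof -
    fix g d :: nat assume g: "1 \<le> g"
    show "f (g + d) \<le> f g"
    proof (induction d)
      case 0 then show ?case by simp
    next
      case (Suc d)
      have "f (g + Suc d) \<le> f (g + d)"
        using ord[of "g+d"] g nn[of "g + Suc d"] nn[of "g + d"] by (auto simp: f_def gval_def)
      then show ?case using Suc by simp
    qed
  qed
  have mono: "\<And>g h. 1 \<le> g \<Longrightarrow> g \<le> h \<Longrightarrow> f h \<le> f g"
  proof -
    fix g h :: nat assume "1 \<le> g" "g \<le> h"
    then show "f h \<le> f g" using monod[of g "h - g"] by simp
  qed
  obtain k where k: "k \<in> {1..n}" "bval m v i (B n k) > 1"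
    using assms(4) by (auto simp: N2_def)
  define t where "t = 2*n - k + 1"
  have kt: "k < t" "1 \<le> k" "t + k = 2*n+1" using k by (auto simp: t_def)
  have big: "f k + f t > 1"
    using k kt by (simp add: bval_def B_def t_def f_def)
  have irr: "f 1 + f (2*n+1) < 3/4 + \<delta>"
    using assms(3) i n1 by (simp add: ONI_def irreducible_def bval_def f_def)
  have "f k \<le> f 1" using mono kt by auto
  then have three: "3 * f t > 1" using irr big C by (simp add: f_def)
  obtain P where P: "(\<Union>k\<in>{1..n}. P k) = {1..m}"
      "\<forall>k\<in>{1..n}. \<forall>l\<in>{1..n}. k \<noteq> l \<longrightarrow> P k \<inter> P l = {}"
      "\<forall>k\<in>{1..n}. bval m v i (P k) = 1"
    using assms(3) i unfolding ONI_def normalized_def by blast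
  have finP: "\<And>b. b \<in> {1..n} \<Longrightarrow> finite (P b)"
  proof -
    fix b assume "b \<in> {1..n}"
    then have "P b \<subseteq> {1..m}" using P(1) by blast
    then show "finite (P b)" using finite_subset by blast
  qed
  have each: "\<And>b. b \<in> {1..n} \<Longrightarrow> card (P b \<inter> {1..t}) + card (P b \<inter> {1..k}) \<le> 2"
  proof -
    fix b assume b: "b \<in> {1..n}"
    show "card (P b \<inter> {1..t}) + card (P b \<inter> {1..k}) \<le> 2"
      by (rule key[OF nn mono kt(2) kt(1) big three finP[OF b]])
         (use P(3) b in \<open>auto simp add: bval_def f_def\<close>)
  qed
  have cnt: "\<And>X. X \<subseteq> {1..m} \<Longrightarrow> (\<Sum>b\<in>{1..n}. card (P b \<inter> X)) = card X"
  proof -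
    fix X assume X: "X \<subseteq> {1..m}"
    have "card (\<Union>b\<in>{1..n}. P b \<inter> X) = (\<Sum>b\<in>{1..n}. card (P b \<inter> X))"
      by (rule card_UN_disjoint) (use finP P(2) in auto)
    moreover have "(\<Union>b\<in>{1..n}. P b \<inter> X) = X" using P(1) X by blast
    ultimately show "(\<Sum>b\<in>{1..n}. card (P b \<inter> X)) = card X" by simp
  qed
  have "(\<Sum>b\<in>{1..n}. card (P b \<inter> {1..t}) + card (P b \<inter> {1..k})) = t + k"
    using cnt[of "{1..t}"] cnt[of "{1..k}"] kt n1 by (simp add: sum.distrib)
  moreover have "(\<Sum>b\<in>{1..n}. card (P b \<inter> {1..t}) + card (P b \<inter> {1..k})) \<le> (\<Sum>b\<in>{1..n}. 2)"
    by (rule sum_mono) (use each in auto)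
  ultimately show False using kt by simp
qed

end
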